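(* For every positive integer $k$, there exist a binary matrix $A_k$ and binary column vectors $x_1,\dots,x_k$ such that $R_{bool}(A_k|x_i)=R_{bool}(A_k)=4$ for all $1\le i\le k$, but $R_{bool}(A_k|x_1,\dots,x_k)\ge k$.
   Context: For a binary $n\times m$ matrix $A$, $R_{bool}(A)$ is the least $k$ such that $A=UV$ with $U\in\{0,1\}^{n\times k}$, $V\in\{0,1\}^{k\times m}$ and the product computed in the Boolean semiring ($1+1=1$). $(A|x_1,\dots,x_t)$ denotes $A$ with the columns $x_1,\dots,x_t$ appended on the right. *)

theory Defs
  imports Main
begin

text \<open>A binary n x m matrix is represented as a function nat => nat => bool,
  only entries i < n, j < m being relevant. True = 1, False = 0.\<close>

definition bool_factorizes :: "nat \<Rightarrow> nat \<Rightarrow> (nat \<Rightarrow> nat \<Rightarrow> bool) \<Rightarrow> nat \<Rightarrow> bool" where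
  "bool_factorizes n m A k \<longleftrightarrow>
     (\<exists>U V :: nat \<Rightarrow> nat \<Rightarrow> bool.
        \<forall>i<n. \<forall>j<m. A i j = (\<exists>l<k. U i l \<and> V l j))"

definition bool_rank :: "nat \<Rightarrow> nat \<Rightarrow> (nat \<Rightarrow> nat \<Rightarrow> bool) \<Rightarrow> nat" where
  "bool_rank n m A = (LEAST k. bool_factorizes n m A k)"

text \<open>(A | x_0, ..., x_{t-1}) for an n x m matrix A: column m + c is the vector x c
  (x c i is its i-th entry).\<close>
definition append_cols :: "nat \<Rightarrow> (nat \<Rightarrow> nat \<Rightarrow> bool) \<Rightarrow> (nat \<Rightarrow> nat \<Rightarrow> bool) \<Rightarrow> nat \<Rightarrow> nat \<Rightarrow> bool" where
  "append_cols m A x i j = (if j < m then A i j else x (j - m) i)"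

end

theory Submission
  imports Defs
begin

lemma fooling:
  assumes fac: "bool_factorizes n m A r"
    and el: "\<And>t. t < p \<Longrightarrow> f t < n \<and> g t < m \<and> A (f t) (g t)"
    and cr: "\<And>s t. s < p \<Longrightarrow> t < p \<Longrightarrow> s \<noteq> t \<Longrightarrow> \<not> A (f s) (g t) \<or> \<not> A (f t) (g s)"
  shows "p \<le> r"
proof -
  obtain U V where UV: "\<forall>i<n. \<forall>j<m. A i j = (\<exists>l<r. U i l \<and> V l j)"
    using fac unfolding bool_factorizes_def by blast
  have ex: "\<forall>t\<in>{..<p}. \<exists>l. l < r \<and> U (f t) l \<and> V l (g t)"
    using el UV by blast
  then obtain h where h: "\<And>t. t < p \<Longrightarrow> h t < r \<and> U (f t) (h t) \<and> V (h t) (g t)"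
    by (metis lessThan_iff)
  have "inj_on h {..<p}"
  proof (rule inj_onI)
    fix s t assume s: "s \<in> {..<p}" and t: "t \<in> {..<p}" and e: "h s = h t"
    show "s = t"
    proof (rule ccontr)
      assume ne: "s \<noteq> t"
      have "A (f s) (g t)" using UV el[of s] el[of t] h[of s] h[of t] s t e by auto
      moreover have "A (f t) (g s)" using UV el[of s] el[of t] h[of s] h[of t] s t e by auto
      ultimately show False using cr[of s t] s t ne by auto
    qed
  qed
  moreover have "h ` {..<p} \<subseteq> {..<r}" using h by auto
  ultimately have "card {..<p} \<le> card {..<r}"
    by (metis card_inj_on_le finite_lessThan)
  then show ?thesis by simp
qed

lemma rank_ge:
  assumes "bool_factorizes n m A r0"
    and "\<And>r. bool_factorizes n m A r \<Longrightarrow> p \<le> r"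
  shows "p \<le> bool_rank n m A"
  unfolding bool_rank_def by (rule LeastI2_ex) (use assms in auto)

lemma rank_eq:
  assumes "bool_factorizes n m A p"
    and "\<And>r. bool_factorizes n m A r \<Longrightarrow> p \<le> r"
  shows "bool_rank n m A = p"
  unfolding bool_rank_def by (rule Least_equality) (use assms in auto)

lemma ex4: "(\<exists>l<(4::nat). P l) \<longleftrightarrow> P 0 \<or> P 1 \<or> P 2 \<or> P 3"
  by (auto simp: numeral_eq_Suc less_Suc_eq)

definition AA :: "nat \<Rightarrow> nat \<Rightarrow> nat \<Rightarrow> bool" where
  "AA k i j = ((i < k \<and> j < 2) \<or> (i = k \<and> j = 0) \<or> (i = k+1 \<and> j = 2) \<or> (i = k+2 \<and> j = 3))"

definition XX :: "nat \<Rightarrow> nat \<Rightarrow> nat \<Rightarrow> bool" where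
  "XX k c i = (i = c \<or> i = k)"

definition UU :: "nat \<Rightarrow> nat \<Rightarrow> nat \<Rightarrow> nat \<Rightarrow> bool" where
  "UU k c i l = ((l = 0 \<and> i < k) \<or> (l = 1 \<and> (i = k \<or> i = c)) \<or> (l = 2 \<and> i = k+1) \<or> (l = 3 \<and> i = k+2))"

definition VV :: "nat \<Rightarrow> nat \<Rightarrow> bool" where
  "VV l j = ((l = 0 \<and> j < 2) \<or> (l = 1 \<and> (j = 0 \<or> j = 4)) \<or> (l = 2 \<and> j = 2) \<or> (l = 3 \<and> j = 3))"

lemma fac_x:
  assumes "c < k"
  shows "bool_factorizes (k+3) (4+1) (append_cols 4 (AA k) (\<lambda>_. XX k c)) 4"
  unfolding bool_factorizes_def
  apply (rule exI[of _ "UU k c"], rule exI[of _ VV])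
  using assms by (auto simp: ex4 append_cols_def AA_def XX_def UU_def VV_def)

lemma fac_A:
  assumes "c < k"
  shows "bool_factorizes (k+3) 4 (AA k) 4"
  unfolding bool_factorizes_def
  apply (rule exI[of _ "UU k c"], rule exI[of _ VV])
  using assms by (auto simp: ex4 AA_def UU_def VV_def)

definition ff :: "nat \<Rightarrow> nat \<Rightarrow> nat" where
  "ff k t = (if t = 0 then 0 else k + t - 1)"
definition gg :: "nat \<Rightarrow> nat" where
  "gg t = (if t = 0 then 1 else if t = 1 then 0 else t)"

lemma low_A:
  assumes "k \<ge> 1" and "m \<ge> 4"
    and "\<And>i j. j < 4 \<Longrightarrow> B i j = AA k i j"
    and "bool_factorizes (k+3) m B r"
  shows "4 \<le> r"
proof (rule fooling[OF assms(4), of 4 "ff k" gg])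
  fix t assume "t < (4::nat)"
  then have "t = 0 \<or> t = 1 \<or> t = 2 \<or> t = 3" by auto
  then show "ff k t < k + 3 \<and> gg t < m \<and> B (ff k t) (gg t)"
    using assms by (auto simp: ff_def gg_def AA_def)
next
  fix s t assume "s < (4::nat)" "t < 4" "s \<noteq> t"
  then have "s = 0 \<or> s = 1 \<or> s = 2 \<or> s = 3" "t = 0 \<or> t = 1 \<or> t = 2 \<or> t = 3" by auto
  then show "\<not> B (ff k s) (gg t) \<or> \<not> B (ff k t) (gg s)"
    using assms \<open>s \<noteq> t\<close> by (auto simp: ff_def gg_def AA_def)
qed

lemma triv_fac: "bool_factorizes n m A m"
  unfolding bool_factorizes_def
  by (rule exI[of _ A], rule exI[of _ "\<lambda>l j. l = j"]) auto

theorem theorem6: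
  fixes k :: nat
  assumes "k \<ge> 1"
  shows "\<exists>(n::nat) (m::nat) (A :: nat \<Rightarrow> nat \<Rightarrow> bool) (x :: nat \<Rightarrow> nat \<Rightarrow> bool).
           bool_rank n m A = 4 \<and>
           (\<forall>c<k. bool_rank n (m + 1) (append_cols m A (\<lambda>_. x c)) = 4) \<and>
           bool_rank n (m + k) (append_cols m A x) \<ge> k"
proof (intro exI conjI allI impI)
  have k0: "0 < k" using assms by simp
  show "bool_rank (k+3) 4 (AA k) = 4"
    by (rule rank_eq[OF fac_A[OF k0]], rule low_A[OF assms, of 4 "AA k"]) auto
  fix c assume c: "c < k"
  show "bool_rank (k+3) (4+1) (append_cols 4 (AA k) (\<lambda>_. XX k c)) = 4"
    by (rule rank_eq[OF fac_x[OF c]], rule low_A[OF assms, of "4+1"])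
       (auto simp: append_cols_def)
next
  show "k \<le> bool_rank (k+3) (4 + k) (append_cols 4 (AA k) (XX k))"
  proof (rule rank_ge[OF triv_fac])
    fix r assume "bool_factorizes (k+3) (4 + k) (append_cols 4 (AA k) (XX k)) r"
    then show "k \<le> r"
      by (rule fooling[of _ _ _ _ k "\<lambda>t. t" "\<lambda>t. 4 + t"])
         (auto simp: append_cols_def XX_def)
  qed
qed

end
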